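(* Let $X$ be a set, let $T:\mathcal P(X)\to\mathcal P(X)$ be an order reversing quasi involution, and let $X_0=\{x\in X:\ x\in T(\{x\})\}$. Let $K_0\subseteq X$ satisfy $K_0\subseteq TK_0$. Then there exists $K\subseteq X$ with $K_0\subseteq K$ and $TK\cap X_0=K$. In particular, if $X=X_0$, then for every $x_0\in X$ there exists $K\subseteq X$ with $x_0\in K=TK$.
   Context: $\mathcal P(X)$ denotes the power set of $X$. A map $T:\mathcal P(X)\to\mathcal P(X)$ is an order reversing quasi involution if for all $K,L\subseteq X$: (i) $K\subseteq TTK$, and (ii) $L\subseteq K$ implies $TK\subseteq TL$. *)

theory Defs
  imports Main
begin

definition order_reversing_quasi_involution :: "'a set \<Rightarrow> ('a set \<Rightarrow> 'a set) \<Rightarrow> bool" where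
  "order_reversing_quasi_involution X T \<longleftrightarrow>
     (\<forall>K. K \<subseteq> X \<longrightarrow> T K \<subseteq> X) \<and>
     (\<forall>K. K \<subseteq> X \<longrightarrow> K \<subseteq> T (T K)) \<and>
     (\<forall>K L. K \<subseteq> X \<longrightarrow> L \<subseteq> K \<longrightarrow> T K \<subseteq> T L)"

end

theory Submission
  imports Defs
begin

lemma inter_sub_T_Union:
  assumes T: "order_reversing_quasi_involution X T"
    and F: "\<forall>K\<in>F. K \<subseteq> X" and ne: "F \<noteq> {}"
  shows "(\<Inter>K\<in>F. T K) \<subseteq> T (\<Union>F)"
proof -
  let ?M = "\<Inter>K\<in>F. T K"
  from T have T1: "\<And>K. K \<subseteq> X \<Longrightarrow> T K \<subseteq> X"
    and T2: "\<And>K. K \<subseteq> X \<Longrightarrow> K \<subseteq> T (T K)"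
    and T3: "\<And>K L. K \<subseteq> X \<Longrightarrow> L \<subseteq> K \<Longrightarrow> T K \<subseteq> T L"
    unfolding order_reversing_quasi_involution_def by auto
  obtain K1 where K1: "K1 \<in> F" using ne by blast
  have "?M \<subseteq> T K1" using K1 by (rule INT_lower)
  also have "T K1 \<subseteq> X" using T1 F K1 by blast
  finally have MX: "?M \<subseteq> X" .
  have UX: "\<Union>F \<subseteq> X" using F by blast
  have "\<And>K. K \<in> F \<Longrightarrow> K \<subseteq> T ?M"
  proof -
    fix K assume K: "K \<in> F"
    have KX: "K \<subseteq> X" using F K by (rule bspec)
    have "T (T K) \<subseteq> T ?M" by (rule T3[OF T1[OF KX] INT_lower[of K F T, OF K]])
    moreover have "K \<subseteq> T (T K)" by (rule T2[OF KX])
    ultimately show "K \<subseteq> T ?M" by (rule subset_trans[rotated])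
  qed
  hence "\<Union>F \<subseteq> T ?M" by (rule Union_least)
  hence "T (T ?M) \<subseteq> T (\<Union>F)" by (rule T3[OF T1[OF MX]])
  moreover have "?M \<subseteq> T (T ?M)" by (rule T2[OF MX])
  ultimately show ?thesis by (rule subset_trans[rotated])
qed

theorem theorem1p4:
  fixes X :: "'a set" and T :: "'a set \<Rightarrow> 'a set" and K0 :: "'a set"
  assumes T: "order_reversing_quasi_involution X T"
    and K0X: "K0 \<subseteq> X" and K0T: "K0 \<subseteq> T K0"
  defines "X0 \<equiv> {x \<in> X. x \<in> T {x}}"
  shows "(\<exists>K. K \<subseteq> X \<and> K0 \<subseteq> K \<and> T K \<inter> X0 = K)
    \<and> (X = X0 \<longrightarrow> (\<forall>x0\<in>X. \<exists>K. K \<subseteq> X \<and> x0 \<in> K \<and> K = T K))"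
proof -
  from T have T1: "\<And>K. K \<subseteq> X \<Longrightarrow> T K \<subseteq> X"
    and T2: "\<And>K. K \<subseteq> X \<Longrightarrow> K \<subseteq> T (T K)"
    and T3: "\<And>K L. K \<subseteq> X \<Longrightarrow> L \<subseteq> K \<Longrightarrow> T K \<subseteq> T L"
    unfolding order_reversing_quasi_involution_def by auto
  have main: "\<exists>K. K \<subseteq> X \<and> K0 \<subseteq> K \<and> T K \<inter> X0 = K"
    if K0X: "K0 \<subseteq> X" and K0T: "K0 \<subseteq> T K0" for K0
  proof -
    define A where "A = {K. K \<subseteq> X \<and> K0 \<subseteq> K \<and> K \<subseteq> T K}"
    have "\<forall>C\<in>chains A. \<exists>U\<in>A. \<forall>Y\<in>C. Y \<subseteq> U"
    proof
      fix C assume C: "C \<in> chains A"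
      show "\<exists>U\<in>A. \<forall>Y\<in>C. Y \<subseteq> U"
      proof (cases "C = {}")
        case True
        then show ?thesis using K0X K0T unfolding A_def by auto
      next
        case False
        have CA: "C \<subseteq> A" and ch: "\<forall>a\<in>C. \<forall>b\<in>C. a \<subseteq> b \<or> b \<subseteq> a"
          using C unfolding chains_def chain_subset_def by auto
        have CX: "\<forall>K\<in>C. K \<subseteq> X" using CA unfolding A_def by auto
        have "\<Union>C \<subseteq> (\<Inter>K\<in>C. T K)"
        proof (rule subsetI)
          fix x assume "x \<in> \<Union>C"
          then obtain J where xJ: "x \<in> J" "J \<in> C" by blast
          show "x \<in> (\<Inter>K\<in>C. T K)"
          proof (rule INT_I)
          fix K assume KC: "K \<in> C"
          have x: "x \<in> J" "J \<in> C" "K \<in> C" using xJ KC by auto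
          have "J \<subseteq> T J" "K \<subseteq> T K" "J \<subseteq> X" "K \<subseteq> X" using x CA unfolding A_def by auto
          from ch x(2,3) have "J \<subseteq> K \<or> K \<subseteq> J" by blast
          then show "x \<in> T K"
          proof
            assume "J \<subseteq> K" then show ?thesis using x \<open>K \<subseteq> T K\<close> by blast
          next
            assume "K \<subseteq> J" then have "T J \<subseteq> T K" using T3 \<open>J \<subseteq> X\<close> by blast
            then show ?thesis using x \<open>J \<subseteq> T J\<close> by blast
          qed
        qed
        qed
        also have "\<dots> \<subseteq> T (\<Union>C)" using inter_sub_T_Union[OF T CX False] .
        finally have "\<Union>C \<subseteq> T (\<Union>C)" .
        moreover have "\<Union>C \<subseteq> X" using CX by blast
        moreover have "K0 \<subseteq> \<Union>C" using False CA unfolding A_def by blast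
        ultimately show ?thesis unfolding A_def by blast
      qed
    qed
    from Zorn_Lemma2[OF this] obtain K where KA: "K \<in> A"
      and mx: "\<forall>Y\<in>A. K \<subseteq> Y \<longrightarrow> Y = K" by blast
    have KX: "K \<subseteq> X" and K0K: "K0 \<subseteq> K" and KT: "K \<subseteq> T K" using KA unfolding A_def by auto
    have "K \<subseteq> T K \<inter> X0"
    proof
      fix x assume x: "x \<in> K"
      have "T K \<subseteq> T {x}" using T3 KX x by blast
      then show "x \<in> T K \<inter> X0" using x KT KX unfolding X0_def by blast
    qed
    moreover have "T K \<inter> X0 \<subseteq> K"
    proof
      fix y assume y: "y \<in> T K \<inter> X0"
      have yX: "y \<in> X" and yy: "y \<in> T {y}" and yT: "y \<in> T K" using y unfolding X0_def by auto
      have "T (T K) \<subseteq> T {y}" using T3[of "T K" "{y}"] T1 KX yT by blast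
      hence KTy: "K \<subseteq> T {y}" using T2 KX by blast
      have FX: "\<forall>Z\<in>{K, {y}}. Z \<subseteq> X" using KX yX by auto
      have "T K \<inter> T {y} \<subseteq> T (K \<union> {y})"
        using inter_sub_T_Union[OF T FX] by simp
      moreover have "K \<union> {y} \<subseteq> T K \<inter> T {y}" using KT KTy yT yy by blast
      ultimately have "K \<union> {y} \<in> A" using KX yX K0K unfolding A_def by blast
      with mx have "K \<union> {y} = K" by blast
      then show "y \<in> K" by blast
    qed
    ultimately show ?thesis using KX K0K by blast
  qed
  show ?thesis
  proof
    show "\<exists>K. K \<subseteq> X \<and> K0 \<subseteq> K \<and> T K \<inter> X0 = K" using main K0X K0T by blast
    show "X = X0 \<longrightarrow> (\<forall>x0\<in>X. \<exists>K. K \<subseteq> X \<and> x0 \<in> K \<and> K = T K)"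
    proof (intro impI ballI)
      fix x0 assume XX: "X = X0" and x0: "x0 \<in> X"
      have "x0 \<in> T {x0}" using XX x0 unfolding X0_def by blast
      then obtain K where K: "K \<subseteq> X" "{x0} \<subseteq> K" "T K \<inter> X0 = K"
        using main[of "{x0}"] x0 by blast
      have "T K \<subseteq> X" using T1 K(1) .
      then have "K = T K" using K(3) XX by blast
      then show "\<exists>K. K \<subseteq> X \<and> x0 \<in> K \<and> K = T K" using K by blast
    qed
  qed
qed

end
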